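(* The set function $h:2^{\{1,\dots,K\}}\to\mathbb R_+$ defined by $$h(\mathcal A)=\sum_{j=1}^N\Big((K-|\mathcal A|+1)\sum_{u\in\mathcal A}p^{\rm su}(u,j)+\sum_{\{u,v\}\subseteq\mathcal A,\,u<v}p^{\rm sic}(\{u,v\},j)\Big)$$ is monotone nondecreasing and submodular, i.e. $h(\mathcal A)\le h(\mathcal B)$ and $h(\mathcal A\cup\{q\})-h(\mathcal A)\ge h(\mathcal B\cup\{q\})-h(\mathcal B)$ for all $\mathcal A\subseteq\mathcal B\subseteq\{1,\dots,K\}$ and $q\notin\mathcal B$.
   Context: Let $K,N,N_r\ge1$. For each user $u\in\{1,\dots,K\}$ and RB $j\in\{1,\dots,N\}$ let $h_{u,j}\in\mathbb C^{N_r}$ and let $\alpha_u\ge0$ be weights. Define $p^{\rm su}(u,j)=\alpha_u\log(1+h_{u,j}^\dagger h_{u,j})$. For a pair $\mathcal U=\{u,v\}$, $u\neq v$, let $\hat u\in\mathcal U$ have $\alpha_{\hat u}=\max\{\alpha_u,\alpha_v\}$ and $\hat v$ the other element, and define $p^{\rm sic}(\mathcal U,j)=p^{\rm su}(\hat u,j)+\alpha_{\hat v}\log\big(1+h_{\hat v,j}^\dagger(I+h_{\hat u,j}h_{\hat u,j}^\dagger)^{-1}h_{\hat v,j}\big)$ (this value does not depend on the choice of $\hat u$ when $\alpha_u=\alpha_v$). *)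

theory Defs
  imports "HOL-Analysis.Analysis"
begin

text \<open>Channel vectors h u j are elements of complex^'r (N_r = CARD('r)).
  Conjugate transpose products are written out explicitly.\<close>

definition hnorm2 :: "complex^'r \<Rightarrow> complex" where
  "hnorm2 x = (\<Sum>i\<in>UNIV. cnj (x $ i) * x $ i)"

definition outer :: "complex^'r \<Rightarrow> complex^'r^'r" where
  "outer x = (\<chi> i k. x $ i * cnj (x $ k))"

definition herm_form :: "complex^'r^'r \<Rightarrow> complex^'r \<Rightarrow> complex" where
  "herm_form M x = (\<Sum>i\<in>UNIV. cnj (x $ i) * (M *v x) $ i)"

definition p_su :: "(nat \<Rightarrow> real) \<Rightarrow> (nat \<Rightarrow> nat \<Rightarrow> complex^'r) \<Rightarrow> nat \<Rightarrow> nat \<Rightarrow> real" where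
  "p_su \<alpha> h u j = \<alpha> u * ln (Re (1 + hnorm2 (h u j)))"

text \<open>SIC value for the pair {u,v}: decode first the user of larger weight
  (ties broken in favour of u; the value is independent of the tie-break).\<close>
definition p_sic :: "(nat \<Rightarrow> real) \<Rightarrow> (nat \<Rightarrow> nat \<Rightarrow> complex^'r) \<Rightarrow> nat \<Rightarrow> nat \<Rightarrow> nat \<Rightarrow> real" where
  "p_sic \<alpha> h u v j =
     (let uh = (if \<alpha> v \<le> \<alpha> u then u else v);
          vh = (if \<alpha> v \<le> \<alpha> u then v else u)
      in p_su \<alpha> h uh j
         + \<alpha> vh * ln (Re (1 + herm_form (matrix_inv (mat 1 + outer (h uh j))) (h vh j))))"

definition hfun :: "nat \<Rightarrow> nat \<Rightarrow> (nat \<Rightarrow> real) \<Rightarrow> (nat \<Rightarrow> nat \<Rightarrow> complex^'r) \<Rightarrow> nat set \<Rightarrow> real" where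
  "hfun K N \<alpha> h A =
     (\<Sum>j\<in>{1..N}. (real K - real (card A) + 1) * (\<Sum>u\<in>A. p_su \<alpha> h u j)
        + (\<Sum>(u,v)\<in>{(u,v). u \<in> A \<and> v \<in> A \<and> u < v}. p_sic \<alpha> h u v j))"

end

theory Submission
  imports Defs
begin


lemma hnorm2_real: "hnorm2 x = complex_of_real (\<Sum>i\<in>UNIV. (cmod (x$i))^2)"
proof -
  have "hnorm2 x = (\<Sum>i\<in>UNIV. complex_of_real ((cmod (x$i))^2))"
    unfolding hnorm2_def by (rule sum.cong) (simp, metis complex_norm_square mult.commute norm_complex_def)
  then show ?thesis by simp
qed

lemma sdl: "(\<Sum>l\<in>UNIV. (if i = l then 1 else 0) * f l) = (f (i::'r::finite) :: complex)"
proof -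
  have "(\<Sum>l\<in>UNIV. (if i = l then 1 else 0) * f l) = (\<Sum>l\<in>UNIV. if i = l then f l else 0)"
    by (rule sum.cong) auto
  then show ?thesis by simp
qed

lemma sdr: "(\<Sum>l\<in>UNIV. g l * (if l = k then 1 else 0)) = (g (k::'r::finite) :: complex)"
proof -
  have "(\<Sum>l\<in>UNIV. g l * (if l = k then 1 else 0)) = (\<Sum>l\<in>UNIV. if l = k then g l else 0)"
    by (rule sum.cong) auto
  then show ?thesis by simp
qed

definition minv :: "complex^'r \<Rightarrow> complex^'r^'r" where
  "minv x = (\<chi> i k. (if i = k then 1 else 0) - x$i * cnj (x$k) / (1 + hnorm2 x))"

lemma d_nz: "1 + hnorm2 x \<noteq> 0"
proof -
  have "Re (1 + hnorm2 x) \<ge> 1" by (simp add: hnorm2_real sum_nonneg)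
  then show ?thesis by (metis zero_complex.simps(1) not_one_le_zero)
qed

lemma d2_nz: "1 + (hnorm2 x * hnorm2 x + hnorm2 x * 2) \<noteq> 0"
proof -
  have "1 + (hnorm2 x * hnorm2 x + hnorm2 x * 2) = (1+hnorm2 x)*(1+hnorm2 x)" by algebra
  then show ?thesis using d_nz[of x] by simp
qed

lemma mul1: "(mat 1 + outer x) ** minv x = mat 1"
proof -
  let ?d = "1 + hnorm2 x"
  have hn: "(\<Sum>l\<in>UNIV. cnj (x$l) * x$l) = hnorm2 x" by (simp add: hnorm2_def)
  show ?thesis
  unfolding vec_eq_iff proof (intro allI)
    fix i k
    have "((mat 1 + outer x) ** minv x) $ i $ k
       = (\<Sum>l\<in>UNIV. ((if i = l then 1 else 0) + x$i * cnj (x$l)) * ((if l = k then 1 else 0) - x$l * cnj (x$k) / ?d))"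
      by (simp add: matrix_matrix_mult_def mat_def outer_def minv_def)
    also have "\<dots> = (\<Sum>l\<in>UNIV. (if i = l then 1 else 0) * ((if l = k then 1 else 0) - x$l * cnj (x$k) / ?d))
        + (\<Sum>l\<in>UNIV. x$i * cnj (x$l) * (if l = k then 1 else 0))
        - (\<Sum>l\<in>UNIV. x$i * cnj (x$k) / ?d * (cnj (x$l) * x$l))"
      by (simp add: distrib_right right_diff_distrib sum.distrib sum_subtractf algebra_simps)
    also have "\<dots> = ((if i = k then 1 else 0) - x$i * cnj (x$k) / ?d) + x$i * cnj (x$k)
        - x$i * cnj (x$k) / ?d * hnorm2 x"
      by (simp only: sdl sdr sum_distrib_left[symmetric] hn)
    also have "\<dots> = (if i = k then 1 else 0)"
      using d_nz[of x] d2_nz[of x] by (simp add: field_simps)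
    also have "\<dots> = mat 1 $ i $ k" by (simp add: mat_def)
    finally show "((mat 1 + outer x) ** minv x) $ i $ k = mat 1 $ i $ k" .
  qed
qed

lemma mul2: "minv x ** (mat 1 + outer x) = mat 1"
proof -
  let ?d = "1 + hnorm2 x"
  have hn: "(\<Sum>l\<in>UNIV. cnj (x$l) * x$l) = hnorm2 x" by (simp add: hnorm2_def)
  show ?thesis
  unfolding vec_eq_iff proof (intro allI)
    fix i k
    have "(minv x ** (mat 1 + outer x)) $ i $ k
       = (\<Sum>l\<in>UNIV. ((if i = l then 1 else 0) - x$i * cnj (x$l) / ?d) * ((if l = k then 1 else 0) + x$l * cnj (x$k)))"
      by (simp add: matrix_matrix_mult_def mat_def outer_def minv_def)
    also have "\<dots> = (\<Sum>l\<in>UNIV. (if i = l then 1 else 0) * ((if l = k then 1 else 0) + x$l * cnj (x$k)))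
        - (\<Sum>l\<in>UNIV. x$i * cnj (x$l) / ?d * (if l = k then 1 else 0))
        - (\<Sum>l\<in>UNIV. x$i * cnj (x$k) / ?d * (cnj (x$l) * x$l))"
      by (simp add: distrib_right right_diff_distrib left_diff_distrib sum.distrib sum_subtractf algebra_simps)
    also have "\<dots> = ((if i = k then 1 else 0) + x$i * cnj (x$k)) - x$i * cnj (x$k) / ?d
        - x$i * cnj (x$k) / ?d * hnorm2 x"
      by (simp only: sdl sdr sum_distrib_left[symmetric] hn)
    also have "\<dots> = (if i = k then 1 else 0)"
      using d_nz[of x] d2_nz[of x] by (simp add: field_simps)
    also have "\<dots> = mat 1 $ i $ k" by (simp add: mat_def)
    finally show "(minv x ** (mat 1 + outer x)) $ i $ k = mat 1 $ i $ k" .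
  qed
qed

lemma inv_eq: "matrix_inv (mat 1 + outer x) = minv x"
proof -
  let ?A = "mat 1 + outer x"
  have "?A ** matrix_inv ?A = mat 1 \<and> matrix_inv ?A ** ?A = mat 1"
    unfolding matrix_inv_def by (rule someI[of _ "minv x"]) (simp add: mul1 mul2)
  then have "matrix_inv ?A = matrix_inv ?A ** (?A ** minv x)" by (simp add: mul1)
  also have "\<dots> = minv x" using \<open>_ \<and> _\<close> by (simp add: matrix_mul_assoc)
  finally show ?thesis .
qed

lemma herm_minv: "herm_form (minv x) y = hnorm2 y - cnj (\<Sum>k\<in>UNIV. cnj (x$k) * y$k) * (\<Sum>k\<in>UNIV. cnj (x$k) * y$k) / (1 + hnorm2 x)"
proof -
  let ?d = "1 + hnorm2 x"
  let ?z = "\<Sum>k\<in>UNIV. cnj (x$k) * y$k"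
  have "herm_form (minv x) y = (\<Sum>i\<in>UNIV. cnj (y$i) * (\<Sum>k\<in>UNIV. ((if i = k then 1 else 0) - x$i * cnj (x$k) / ?d) * y$k))"
    by (simp add: herm_form_def matrix_vector_mult_def minv_def)
  also have "\<dots> = (\<Sum>i\<in>UNIV. cnj (y$i) * y$i - cnj (y$i) * x$i * ?z / ?d)"
  proof (rule sum.cong[OF refl])
    fix i
    have "(\<Sum>k\<in>UNIV. ((if i = k then 1 else 0) - x$i * cnj (x$k) / ?d) * y$k)
       = (\<Sum>k\<in>UNIV. (if i = k then 1 else 0) * y$k) - (\<Sum>k\<in>UNIV. x$i / ?d * (cnj (x$k) * y$k))"
      by (simp add: left_diff_distrib sum_subtractf algebra_simps)
    also have "\<dots> = y$i - x$i / ?d * ?z" by (simp only: sdl sum_distrib_left[symmetric])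
    finally have e: "(\<Sum>k\<in>UNIV. ((if i = k then 1 else 0) - x$i * cnj (x$k) / ?d) * y$k) = y$i - x$i / ?d * ?z" .
    show "cnj (y$i) * (\<Sum>k\<in>UNIV. ((if i = k then 1 else 0) - x$i * cnj (x$k) / ?d) * y$k) = cnj (y$i) * y$i - cnj (y$i) * x$i * ?z / ?d"
      by (subst e) (simp add: algebra_simps)
  qed
  also have "\<dots> = hnorm2 y - (\<Sum>i\<in>UNIV. cnj (y$i) * x$i) * ?z / ?d"
    by (simp add: sum_subtractf hnorm2_def sum_divide_distrib sum_distrib_right)
  also have "(\<Sum>i\<in>UNIV. cnj (y$i) * x$i) = cnj ?z" by (simp add: mult.commute)
  finally show ?thesis .
qed

lemma herm_re: "Re (1 + herm_form (minv x) y) = 1 + (\<Sum>i\<in>UNIV. (cmod (y$i))^2)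
   - (cmod (\<Sum>k\<in>UNIV. cnj (x$k) * y$k))^2 / (1 + (\<Sum>i\<in>UNIV. (cmod (x$i))^2))"
proof -
  let ?z = "\<Sum>k\<in>UNIV. cnj (x$k) * y$k"
  have w: "\<And>w. cnj w * w = complex_of_real ((cmod w)^2)" by (metis complex_norm_square mult.commute)
  have "cnj ?z * ?z = complex_of_real ((cmod ?z)^2)" by (rule w)
  then have "herm_form (minv x) y = complex_of_real ((\<Sum>i\<in>UNIV. (cmod (y$i))^2)
     - (cmod ?z)^2 / (1 + (\<Sum>i\<in>UNIV. (cmod (x$i))^2)))"
    by (simp add: herm_minv hnorm2_real)
  then show ?thesis by simp
qed

lemma cs: "(cmod (\<Sum>k\<in>UNIV. cnj (x$k) * y$k))^2 \<le> (\<Sum>i\<in>UNIV. (cmod (x$i))^2) * (\<Sum>i\<in>UNIV. (cmod (y$i))^2)"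
proof -
  have "cmod (\<Sum>k\<in>UNIV. cnj (x$k) * y$k) \<le> (\<Sum>k\<in>UNIV. cmod (x$k) * cmod (y$k))"
    by (rule order_trans[OF norm_sum]) (simp add: norm_mult)
  then have "(cmod (\<Sum>k\<in>UNIV. cnj (x$k) * y$k))^2 \<le> (\<Sum>k\<in>UNIV. cmod (x$k) * cmod (y$k))^2"
    by (simp add: power_mono)
  also have "\<dots> \<le> (\<Sum>i\<in>UNIV. (cmod (x$i))^2) * (\<Sum>i\<in>UNIV. (cmod (y$i))^2)"
    by (rule Cauchy_Schwarz_ineq_sum)
  finally show ?thesis .
qed

lemma real_bounds:
  fixes a b c aU aV :: real
  assumes "a \<ge> 0" "b \<ge> 0" "c \<ge> 0" "c \<le> a * b" "aU \<ge> aV" "aV \<ge> 0"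
  defines "L \<equiv> ln (1 + b - c / (1 + a))"
  shows "aU * ln (1 + a) + aV * L \<ge> aV * ln (1 + b)"
    and "aU * ln (1 + a) + aV * L \<ge> aU * ln (1 + a)"
    and "aU * ln (1 + a) + aV * L \<le> aU * ln (1 + a) + aV * ln (1 + b)"
proof -
  have pa: "1 + a > 0" using assms by simp
  have "c / (1 + a) \<le> a * b / (1 + a)" using assms pa by (simp add: divide_right_mono)
  moreover have "a * b / (1 + a) \<le> b" using assms pa by (simp add: field_simps)
  ultimately have q: "1 + b - c / (1 + a) \<ge> 1" using assms pa
    by (smt (verit, ccfv_SIG) divide_nonneg_nonneg mult_nonneg_nonneg field_sum_of_halves)
  have L0: "L \<ge> 0" unfolding L_def using q by simp
  have "c / (1 + a) \<ge> 0" using assms pa by simp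
  then have "L \<le> ln (1 + b)" unfolding L_def using q by (simp add: ln_le_cancel_iff)
  then show "aU * ln (1 + a) + aV * L \<le> aU * ln (1 + a) + aV * ln (1 + b)"
    using assms by (simp add: mult_left_mono)
  show "aU * ln (1 + a) + aV * L \<ge> aU * ln (1 + a)" using L0 assms by simp
  have la: "ln (1 + a) \<ge> 0" using assms by simp
  have "aU * ln (1 + a) \<ge> aV * ln (1 + a)" using la assms by (simp add: mult_right_mono)
  moreover have "ln (1 + a) + L = ln ((1 + a) * (1 + b - c / (1 + a)))"
    unfolding L_def using q pa by (simp add: ln_mult)
  moreover have "(1 + a) * (1 + b - c / (1 + a)) = (1+a)*(1+b) - c" using pa by (simp add: field_simps)
  moreover have "(1+a)*(1+b) - c \<ge> 1 + b" using assms by (simp add: algebra_simps)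
  ultimately have "ln (1 + a) + L \<ge> ln (1 + b)" using assms by simp
  then have "aV * (ln (1 + a) + L) \<ge> aV * ln (1 + b)" using assms by (simp add: mult_left_mono)
  then show "aU * ln (1 + a) + aV * L \<ge> aV * ln (1 + b)"
    using \<open>aU * ln (1 + a) \<ge> aV * ln (1 + a)\<close> by (simp add: algebra_simps)
qed

definition nsq :: "complex^'r \<Rightarrow> real" where "nsq x = (\<Sum>i\<in>UNIV. (cmod (x$i))^2)"

lemma p_su_eq: "p_su \<alpha> h u j = \<alpha> u * ln (1 + nsq (h u j))"
  by (simp add: p_su_def hnorm2_real nsq_def)

lemma sic_gen:
  fixes h :: "nat \<Rightarrow> nat \<Rightarrow> complex^'r" and j :: nat
  assumes "\<alpha> v \<le> \<alpha> u" "\<alpha> v \<ge> 0"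
  defines "S \<equiv> p_su \<alpha> h u j + \<alpha> v * ln (Re (1 + herm_form (matrix_inv (mat 1 + outer (h u j))) (h v j)))"
  shows "S \<ge> p_su \<alpha> h u j" "S \<ge> p_su \<alpha> h v j" "S \<le> p_su \<alpha> h u j + p_su \<alpha> h v j"
proof -
  let ?a = "nsq (h u j)" and ?b = "nsq (h v j)"
  let ?c = "(cmod (\<Sum>k\<in>UNIV. cnj (h u j$k) * h v j$k))^2"
  have S: "S = \<alpha> u * ln (1 + ?a) + \<alpha> v * ln (1 + ?b - ?c / (1 + ?a))"
    unfolding S_def p_su_eq inv_eq herm_re nsq_def by simp
  have ab: "?a \<ge> 0" "?b \<ge> 0" by (simp_all add: nsq_def sum_nonneg)
  have c: "?c \<le> ?a * ?b" unfolding nsq_def by (rule cs)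
  note R = real_bounds[OF ab _ c assms(1,2)]
  show "S \<ge> p_su \<alpha> h u j" "S \<ge> p_su \<alpha> h v j" "S \<le> p_su \<alpha> h u j + p_su \<alpha> h v j"
    using R by (simp_all add: S p_su_eq)
qed

lemma sic_bounds:
  assumes "\<alpha> u \<ge> 0" "\<alpha> v \<ge> 0"
  shows "p_sic \<alpha> h u v j \<ge> p_su \<alpha> h u j" "p_sic \<alpha> h u v j \<ge> p_su \<alpha> h v j"
    "p_sic \<alpha> h u v j \<le> p_su \<alpha> h u j + p_su \<alpha> h v j"
proof -
  have "p_sic \<alpha> h u v j \<ge> p_su \<alpha> h u j \<and> p_sic \<alpha> h u v j \<ge> p_su \<alpha> h v j \<and>
    p_sic \<alpha> h u v j \<le> p_su \<alpha> h u j + p_su \<alpha> h v j"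
  proof (cases "\<alpha> v \<le> \<alpha> u")
    case True
    then show ?thesis using sic_gen[OF True assms(2), of h j] by (simp add: p_sic_def)
  next
    case False
    then have F: "\<alpha> u \<le> \<alpha> v" by simp
    show ?thesis using sic_gen[OF F assms(1), of h j] False by (simp add: p_sic_def)
  qed
  then show "p_sic \<alpha> h u v j \<ge> p_su \<alpha> h u j" "p_sic \<alpha> h u v j \<ge> p_su \<alpha> h v j"
    "p_sic \<alpha> h u v j \<le> p_su \<alpha> h u j + p_su \<alpha> h v j" by auto
qed




definition G :: "nat \<Rightarrow> (nat \<Rightarrow> real) \<Rightarrow> (nat \<Rightarrow> nat \<Rightarrow> real) \<Rightarrow> nat set \<Rightarrow> real" where
  "G K s T A = (real K - real (card A) + 1) * sum s A
     + (\<Sum>(u,v)\<in>{(u,v). u \<in> A \<and> v \<in> A \<and> u < v}. T u v)"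

lemma pairs_insert:
  fixes q :: nat and T :: "nat \<Rightarrow> nat \<Rightarrow> real"
  assumes "finite A" "q \<notin> A"
  shows "(\<Sum>(u,v)\<in>{(u,v). u \<in> insert q A \<and> v \<in> insert q A \<and> u < v}. T u v)
    = (\<Sum>(u,v)\<in>{(u,v). u \<in> A \<and> v \<in> A \<and> u < v}. T u v)
      + (\<Sum>u\<in>A. if u < q then T u q else T q u)"
proof -
  let ?f = "\<lambda>u. if u < q then (u, q) else (q, u)"
  have eq: "{(u,v). u \<in> insert q A \<and> v \<in> insert q A \<and> u < v}
     = {(u,v). u \<in> A \<and> v \<in> A \<and> u < v} \<union> ?f ` A"
  proof (intro equalityI subsetI)
    fix p assume "p \<in> {(u,v). u \<in> insert q A \<and> v \<in> insert q A \<and> u < v}"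
    then obtain u v where p: "p = (u,v)" "u \<in> insert q A" "v \<in> insert q A" "u < v" by auto
    show "p \<in> {(u,v). u \<in> A \<and> v \<in> A \<and> u < v} \<union> ?f ` A"
    proof (cases "u = q")
      case True
      have vA: "v \<in> A" using p True assms(2) by auto
      have "\<not> v < q" using p True by simp
      then have "p = ?f v" using p True by simp
      then show ?thesis using vA by blast
    next
      case False
      note uF = False
      show ?thesis
      proof (cases "v = q")
        case True
        then have "u \<in> A" "p = ?f u" using p uF by auto
        then show ?thesis by blast
      qed (use p uF in auto)
    qed
  next
    fix p assume "p \<in> {(u,v). u \<in> A \<and> v \<in> A \<and> u < v} \<union> ?f ` A"
    then show "p \<in> {(u,v). u \<in> insert q A \<and> v \<in> insert q A \<and> u < v}"
      using assms(2) by (auto simp: linorder_neq_iff) (metis le_neq_implies_less not_less)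
  qed
  have fin: "finite {(u,v). u \<in> A \<and> v \<in> A \<and> u < v}"
    by (rule finite_subset[of _ "A \<times> A"]) (auto simp: assms)
  have disj: "{(u,v). u \<in> A \<and> v \<in> A \<and> u < v} \<inter> ?f ` A = {}"
    using assms(2) by auto
  have inj: "inj_on ?f A"
    using assms(2) by (auto simp: inj_on_def split: if_splits)
  have "(\<Sum>(u,v)\<in>?f ` A. T u v) = (\<Sum>u\<in>A. (\<lambda>(u,v). T u v) (?f u))"
    by (rule sum.reindex[OF inj, unfolded comp_def])
  also have "\<dots> = (\<Sum>u\<in>A. if u < q then T u q else T q u)"
    by (rule sum.cong) auto
  finally have r: "(\<Sum>(u,v)\<in>?f ` A. T u v) = (\<Sum>u\<in>A. if u < q then T u q else T q u)" .
  show ?thesis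
  proof -
    have fi: "finite (?f ` A)" using assms by simp
    show ?thesis unfolding eq sum.union_disjoint[OF fin fi disj] r ..
  qed
qed

lemma marginal:
  assumes "finite A" "q \<notin> A"
  shows "G K s T (insert q A) - G K s T A
     = (real K - real (card A)) * s q - sum s A + (\<Sum>u\<in>A. if u < q then T u q else T q u)"
  unfolding G_def pairs_insert[OF assms] using assms by (simp add: algebra_simps)

context
  fixes K :: nat and s :: "nat \<Rightarrow> real" and T :: "nat \<Rightarrow> nat \<Rightarrow> real"
  assumes s0: "\<And>u. u \<in> {1..K} \<Longrightarrow> s u \<ge> 0"
    and lo: "\<And>u v. u \<in> {1..K} \<Longrightarrow> v \<in> {1..K} \<Longrightarrow> T u v \<ge> s u"
    and lo2: "\<And>u v. u \<in> {1..K} \<Longrightarrow> v \<in> {1..K} \<Longrightarrow> T u v \<ge> s v"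
    and hi: "\<And>u v. u \<in> {1..K} \<Longrightarrow> v \<in> {1..K} \<Longrightarrow> T u v \<le> s u + s v"
begin

lemma marg_nonneg:
  assumes "A \<subseteq> {1..K}" "q \<in> {1..K}" "q \<notin> A"
  shows "G K s T (insert q A) - G K s T A \<ge> 0"
proof -
  have fA: "finite A" using assms finite_subset by blast
  have "card A \<le> card {1..K}" by (rule card_mono) (use assms in auto)
  then have cA: "real (card A) \<le> real K" by simp
  have "(\<Sum>u\<in>A. s u) \<le> (\<Sum>u\<in>A. if u < q then T u q else T q u)"
    by (rule sum_mono) (use assms lo lo2 in auto)
  moreover have "(real K - real (card A)) * s q \<ge> 0" using cA s0 assms by simp
  ultimately show ?thesis by (simp add: marginal[OF fA assms(3)])
qed

lemma mono_G:
  assumes "A \<subseteq> B" "B \<subseteq> {1..K}"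
  shows "G K s T A \<le> G K s T B"
proof -
  have "finite D \<Longrightarrow> A \<union> D \<subseteq> {1..K} \<Longrightarrow> G K s T A \<le> G K s T (A \<union> D)" for D
  proof (induction D rule: finite_induct)
    case empty then show ?case by simp
  next
    case (insert x D)
    show ?case
    proof (cases "x \<in> A")
      case True
      then have "A \<union> insert x D = A \<union> D" by auto
      then show ?thesis using insert by simp
    next
      case False
      then have xn: "x \<notin> A \<union> D" using insert by simp
      have "G K s T (A \<union> D) \<le> G K s T (insert x (A \<union> D))"
        using marg_nonneg[of "A \<union> D" x] insert xn by simp
      then show ?thesis using insert by simp
    qed
  qed
  moreover have "finite (B - A)" using assms finite_subset by blast
  moreover have "A \<union> (B - A) = B" using assms by auto
  ultimately show ?thesis using assms by metis
qed

lemma submod_G: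
  assumes "A \<subseteq> B" "B \<subseteq> {1..K}" "q \<in> {1..K}" "q \<notin> B"
  shows "G K s T (insert q A) - G K s T A \<ge> G K s T (insert q B) - G K s T B"
proof -
  let ?P = "\<lambda>u. if u < q then T u q else T q u"
  have fB: "finite B" using assms finite_subset by blast
  have fA: "finite A" using assms finite_subset fB by blast
  have qA: "q \<notin> A" using assms by auto
  have sB: "sum f B = sum f A + sum f (B - A)" for f :: "nat \<Rightarrow> real"
    using sum.subset_diff[OF assms(1) fB, of f] by simp
  have cB: "real (card B) = real (card A) + real (card (B - A))"
    using card_Diff_subset[OF fA assms(1)] card_mono[OF fB assms(1)] by simp
  have "(\<Sum>u\<in>B - A. s u + s q - ?P u) \<ge> 0"
  proof (rule sum_nonneg)
    fix u assume "u \<in> B - A"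
    then have "u \<in> {1..K}" using assms by auto
    then show "0 \<le> s u + s q - ?P u" using hi[of u q] hi[of q u] assms(3) by auto
  qed
  then have "(\<Sum>u\<in>B - A. s u) + real (card (B - A)) * s q - (\<Sum>u\<in>B - A. ?P u) \<ge> 0"
    by (simp add: sum.distrib sum_subtractf)
  then show ?thesis
    by (simp add: marginal[OF fA qA] marginal[OF fB assms(4)] sB[of s] sB[of ?P] cB algebra_simps)
qed

end

lemma hfun_G: "hfun K N \<alpha> h A = (\<Sum>j\<in>{1..N}. G K (\<lambda>u. p_su \<alpha> h u j) (\<lambda>u v. p_sic \<alpha> h u v j) A)"
  by (simp add: hfun_def G_def)

theorem theorem3:
  fixes K N :: nat and \<alpha> :: "nat \<Rightarrow> real" and h :: "nat \<Rightarrow> nat \<Rightarrow> complex^'r"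
  assumes "K \<ge> 1" and "N \<ge> 1" and "\<And>u. u \<in> {1..K} \<Longrightarrow> \<alpha> u \<ge> 0"
  shows "\<forall>A B q. A \<subseteq> B \<and> B \<subseteq> {1..K} \<longrightarrow>
           hfun K N \<alpha> h A \<le> hfun K N \<alpha> h B \<and>
           (q \<in> {1..K} \<and> q \<notin> B \<longrightarrow>
              hfun K N \<alpha> h (insert q A) - hfun K N \<alpha> h A
                \<ge> hfun K N \<alpha> h (insert q B) - hfun K N \<alpha> h B)"
proof (intro allI impI conjI)
  fix A B q
  assume AB: "A \<subseteq> B \<and> B \<subseteq> {1..K}"
  have s0: "p_su \<alpha> h u j \<ge> 0" if "u \<in> {1..K}" for u j
    using assms(3)[OF that] by (simp add: p_su_eq nsq_def sum_nonneg)
  have lo: "p_sic \<alpha> h u v j \<ge> p_su \<alpha> h u j" if "u \<in> {1..K}" "v \<in> {1..K}" for u v j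
    using sic_bounds(1)[OF assms(3)[OF that(1)] assms(3)[OF that(2)]] .
  have lo2: "p_sic \<alpha> h u v j \<ge> p_su \<alpha> h v j" if "u \<in> {1..K}" "v \<in> {1..K}" for u v j
    using sic_bounds(2)[OF assms(3)[OF that(1)] assms(3)[OF that(2)]] .
  have hi: "p_sic \<alpha> h u v j \<le> p_su \<alpha> h u j + p_su \<alpha> h v j" if "u \<in> {1..K}" "v \<in> {1..K}" for u v j
    using sic_bounds(3)[OF assms(3)[OF that(1)] assms(3)[OF that(2)]] .
  show "hfun K N \<alpha> h A \<le> hfun K N \<alpha> h B"
    unfolding hfun_G
  proof (rule sum_mono)
    fix j show "G K (\<lambda>u. p_su \<alpha> h u j) (\<lambda>u v. p_sic \<alpha> h u v j) A \<le> G K (\<lambda>u. p_su \<alpha> h u j) (\<lambda>u v. p_sic \<alpha> h u v j) B"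
      by (rule mono_G[where s="\<lambda>u. p_su \<alpha> h u j" and T="\<lambda>u v. p_sic \<alpha> h u v j"];
          (use s0 lo lo2 hi AB in auto)?)
  qed
  assume q: "q \<in> {1..K} \<and> q \<notin> B"
  show "hfun K N \<alpha> h (insert q A) - hfun K N \<alpha> h A
                \<ge> hfun K N \<alpha> h (insert q B) - hfun K N \<alpha> h B"
    unfolding hfun_G sum_subtractf[symmetric]
  proof (rule sum_mono)
    fix j show "G K (\<lambda>u. p_su \<alpha> h u j) (\<lambda>u v. p_sic \<alpha> h u v j) (insert q B) - G K (\<lambda>u. p_su \<alpha> h u j) (\<lambda>u v. p_sic \<alpha> h u v j) B
      \<le> G K (\<lambda>u. p_su \<alpha> h u j) (\<lambda>u v. p_sic \<alpha> h u v j) (insert q A) - G K (\<lambda>u. p_su \<alpha> h u j) (\<lambda>u v. p_sic \<alpha> h u v j) A"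
      by (rule submod_G[where s="\<lambda>u. p_su \<alpha> h u j" and T="\<lambda>u v. p_sic \<alpha> h u v j"];
          (use s0 lo lo2 hi AB q in auto)?)
  qed
qed

end
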